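(* Let $R$ be a commutative ring. Then $R$ is locally stable if and only if for every $c\in R$ and every $u\in R$ whose image $\overline{u}$ is a unit of $R/cR$, there exists a stable element $a\in R$ with $u-a\in cR$.
   Context: All rings are commutative with identity. A ring $S$ has stable range 1 if whenever $a,b\in S$ with $aS+bS=S$ there is $y\in S$ with $a+by$ a unit. An element $a\in R$ is stable if $R/aR$ has stable range 1. $R$ is locally stable if whenever $a,b\in R$ with $aR+bR=R$ there is $y\in R$ such that $R/(a+by)R$ has stable range 1. *)

theory Defs
  imports "HOL-Algebra.Algebra"
begin

definition stable_range_one :: "('a, 'b) ring_scheme \<Rightarrow> bool" where
  "stable_range_one S \<longleftrightarrow>
     (\<forall>a \<in> carrier S. \<forall>b \<in> carrier S.
        (PIdl\<^bsub>S\<^esub> a) <+>\<^bsub>S\<^esub> (PIdl\<^bsub>S\<^esub> b) = carrier S \<longrightarrow>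
        (\<exists>y \<in> carrier S. a \<oplus>\<^bsub>S\<^esub> (b \<otimes>\<^bsub>S\<^esub> y) \<in> Units S))"

definition stable_elem :: "('a, 'b) ring_scheme \<Rightarrow> 'a \<Rightarrow> bool" where
  "stable_elem R a \<longleftrightarrow> stable_range_one (R Quot (PIdl\<^bsub>R\<^esub> a))"

definition locally_stable :: "('a, 'b) ring_scheme \<Rightarrow> bool" where
  "locally_stable R \<longleftrightarrow>
     (\<forall>a \<in> carrier R. \<forall>b \<in> carrier R.
        (PIdl\<^bsub>R\<^esub> a) <+>\<^bsub>R\<^esub> (PIdl\<^bsub>R\<^esub> b) = carrier R \<longrightarrow>
        (\<exists>y \<in> carrier R. stable_elem R (a \<oplus>\<^bsub>R\<^esub> (b \<otimes>\<^bsub>R\<^esub> y))))"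

end

theory Submission
  imports Defs
begin

context cring
begin

lemma unit_quot_iff:
  assumes c: "c \<in> carrier R" and u: "u \<in> carrier R"
  shows "(PIdl c) +> u \<in> Units (R Quot (PIdl c)) \<longleftrightarrow> (\<exists>x\<in>carrier R. u \<otimes> x \<ominus> \<one> \<in> PIdl c)"
proof -
  interpret I: ideal "PIdl c" R using cgenideal_ideal[OF c] .
  show ?thesis
  proof
    assume "(PIdl c) +> u \<in> Units (R Quot (PIdl c))"
    then obtain Y where Y: "Y \<in> a_rcosets (PIdl c)" and "Y \<otimes>\<^bsub>R Quot PIdl c\<^esub> (PIdl c +> u) = PIdl c +> \<one>"
      unfolding Units_def FactRing_def by auto
    moreover obtain x where x: "x \<in> carrier R" "Y = PIdl c +> x" using Y unfolding A_RCOSETS_def' by auto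
    ultimately have "PIdl c +> (x \<otimes> u) = PIdl c +> \<one>"
      using I.rcoset_mult_add u by (simp add: FactRing_def)
    hence "x \<otimes> u \<ominus> \<one> \<in> PIdl c"
      using quotient_eq_iff_same_a_r_cos[OF I.is_ideal] x u by simp
    thus "\<exists>x\<in>carrier R. u \<otimes> x \<ominus> \<one> \<in> PIdl c" using x u m_comm by metis
  next
    assume "\<exists>x\<in>carrier R. u \<otimes> x \<ominus> \<one> \<in> PIdl c"
    then obtain x where x: "x \<in> carrier R" "u \<otimes> x \<ominus> \<one> \<in> PIdl c" by auto
    hence e1: "PIdl c +> (u \<otimes> x) = PIdl c +> \<one>"
      using quotient_eq_iff_same_a_r_cos[OF I.is_ideal] u by simp
    hence e2: "PIdl c +> (x \<otimes> u) = PIdl c +> \<one>" using m_comm x u by metis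
    have m1: "PIdl c +> x \<in> a_rcosets (PIdl c)" "PIdl c +> u \<in> a_rcosets (PIdl c)"
      using x u unfolding A_RCOSETS_def' by auto
    show "(PIdl c) +> u \<in> Units (R Quot (PIdl c))"
      unfolding Units_def FactRing_def using m1 e1 e2 I.rcoset_mult_add x u
      by (auto intro!: bexI[of _ "PIdl c +> x"])
  qed
qed

lemma sum_ideal_iff:
  assumes a: "a \<in> carrier R" and b: "b \<in> carrier R"
  shows "(PIdl a) <+> (PIdl b) = carrier R \<longleftrightarrow> (\<exists>x\<in>carrier R. \<exists>y\<in>carrier R. x \<otimes> a \<oplus> y \<otimes> b = \<one>)"
proof
  assume "(PIdl a) <+> (PIdl b) = carrier R"
  hence "\<one> \<in> (PIdl a) <+> (PIdl b)" by simp
  thus "\<exists>x\<in>carrier R. \<exists>y\<in>carrier R. x \<otimes> a \<oplus> y \<otimes> b = \<one>"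
    unfolding set_add_def' cgenideal_def by fastforce
next
  assume "\<exists>x\<in>carrier R. \<exists>y\<in>carrier R. x \<otimes> a \<oplus> y \<otimes> b = \<one>"
  then obtain x y where xy: "x \<in> carrier R" "y \<in> carrier R" "x \<otimes> a \<oplus> y \<otimes> b = \<one>" by auto
  have id: "ideal ((PIdl a) <+> (PIdl b)) R"
    using add_ideals cgenideal_ideal a b by blast
  have "\<one> \<in> (PIdl a) <+> (PIdl b)"
    unfolding set_add_def' cgenideal_def using xy by force
  thus "(PIdl a) <+> (PIdl b) = carrier R" using ideal.one_imp_carrier[OF id] by blast
qed

lemma main:
  shows "locally_stable R \<longleftrightarrow>
    (\<forall>c \<in> carrier R. \<forall>u \<in> carrier R.
       (PIdl c) +> u \<in> Units (R Quot (PIdl c)) \<longrightarrow>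
       (\<exists>a \<in> carrier R. stable_elem R a \<and> u \<ominus> a \<in> PIdl c))"
proof
  assume LS: "locally_stable R"
  show "\<forall>c \<in> carrier R. \<forall>u \<in> carrier R.
     (PIdl c) +> u \<in> Units (R Quot (PIdl c)) \<longrightarrow>
     (\<exists>a \<in> carrier R. stable_elem R a \<and> u \<ominus> a \<in> PIdl c)"
  proof (intro ballI impI)
    fix c u assume c: "c \<in> carrier R" and u: "u \<in> carrier R"
      and U: "(PIdl c) +> u \<in> Units (R Quot (PIdl c))"
    obtain x where x: "x \<in> carrier R" "u \<otimes> x \<ominus> \<one> \<in> PIdl c"
      using unit_quot_iff[OF c u] U by auto
    then obtain z where z: "z \<in> carrier R" "u \<otimes> x \<ominus> \<one> = z \<otimes> c"
      unfolding cgenideal_def by auto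
    have "x \<otimes> u \<oplus> (\<ominus> z) \<otimes> c = (u \<otimes> x \<ominus> \<one>) \<oplus> \<one> \<ominus> z \<otimes> c"
      using z(1) x u c by algebra
    also have "\<dots> = z \<otimes> c \<oplus> \<one> \<ominus> z \<otimes> c" using z(2) by simp
    also have "\<dots> = \<one>" using z(1) c by algebra
    finally have "x \<otimes> u \<oplus> (\<ominus> z) \<otimes> c = \<one>" .
    hence "(PIdl u) <+> (PIdl c) = carrier R"
      using sum_ideal_iff[OF u c] x z by blast
    then obtain y where y: "y \<in> carrier R" "stable_elem R (u \<oplus> c \<otimes> y)"
      using LS u c unfolding locally_stable_def by blast
    have "u \<ominus> (u \<oplus> c \<otimes> y) = (\<ominus> y) \<otimes> c" using u c y by algebra
    hence "u \<ominus> (u \<oplus> c \<otimes> y) \<in> PIdl c" unfolding cgenideal_def using y by auto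
    thus "\<exists>a \<in> carrier R. stable_elem R a \<and> u \<ominus> a \<in> PIdl c"
      using y u c by blast
  qed
next
  assume H: "\<forall>c \<in> carrier R. \<forall>u \<in> carrier R.
     (PIdl c) +> u \<in> Units (R Quot (PIdl c)) \<longrightarrow>
     (\<exists>a \<in> carrier R. stable_elem R a \<and> u \<ominus> a \<in> PIdl c)"
  show "locally_stable R"
    unfolding locally_stable_def
  proof (intro ballI impI)
    fix a b assume a: "a \<in> carrier R" and b: "b \<in> carrier R"
      and S: "(PIdl a) <+> (PIdl b) = carrier R"
    obtain x y where xy: "x \<in> carrier R" "y \<in> carrier R" "x \<otimes> a \<oplus> y \<otimes> b = \<one>"
      using sum_ideal_iff[OF a b] S by auto
    have "a \<otimes> x \<ominus> \<one> = a \<otimes> x \<ominus> (x \<otimes> a \<oplus> y \<otimes> b)" using xy(3) by simp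
    also have "\<dots> = (\<ominus> y) \<otimes> b" using xy(1,2) a b by algebra
    finally have "a \<otimes> x \<ominus> \<one> = (\<ominus> y) \<otimes> b" .
    hence "a \<otimes> x \<ominus> \<one> \<in> PIdl b" unfolding cgenideal_def using xy by auto
    hence "(PIdl b) +> a \<in> Units (R Quot (PIdl b))"
      using unit_quot_iff[OF b a] xy by blast
    then obtain a' where a': "a' \<in> carrier R" "stable_elem R a'" "a \<ominus> a' \<in> PIdl b"
      using H a b by blast
    then obtain z where z: "z \<in> carrier R" "a \<ominus> a' = z \<otimes> b"
      unfolding cgenideal_def by auto
    have "a' = a \<ominus> (a \<ominus> a')" using a a' by algebra
    also have "\<dots> = a \<ominus> z \<otimes> b" using z(2) by simp
    also have "\<dots> = a \<oplus> b \<otimes> (\<ominus> z)" using z(1) a b by algebra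
    finally have "a' = a \<oplus> b \<otimes> (\<ominus> z)" .
    thus "\<exists>y\<in>carrier R. stable_elem R (a \<oplus> b \<otimes> y)" using a' z by auto
  qed
qed

end

theorem proposition2p1:
  fixes R :: "('a, 'b) ring_scheme"
  assumes "cring R"
  shows "locally_stable R \<longleftrightarrow>
    (\<forall>c \<in> carrier R. \<forall>u \<in> carrier R.
       (PIdl\<^bsub>R\<^esub> c) +>\<^bsub>R\<^esub> u \<in> Units (R Quot (PIdl\<^bsub>R\<^esub> c)) \<longrightarrow>
       (\<exists>a \<in> carrier R. stable_elem R a \<and> u \<ominus>\<^bsub>R\<^esub> a \<in> PIdl\<^bsub>R\<^esub> c))"
  using cring.main[OF assms] .

end
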